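(* There is a universal constant $c_0$ such that the following holds. Let $\bm{a}_1,\dots,\bm{a}_N\in\mathbb{C}^D$ be i.i.d. uniform on the sphere $\{\bm{x}\in\mathbb{C}^D:\|\bm{x}\|_2=\sqrt{D}\}$, with $a_{k,i}$ the $i$-th entry of $\bm{a}_k$, and let $\bm{\gamma}^{\natural}\in\mathbb{R}^N$ be nonnegative and supported on $S^{\natural}\subset[N]$. If $8\log(DN)<D<\infty$, then with probability at least $1-\frac{c_0}{D\sqrt{D}}$ both $$\left|\frac1D\bm{a}_k^*\bm{a}_\ell\right|\le\sqrt{\frac{32\log(DN)}{D}}\quad\text{for all }k\ne\ell,$$ and $$\sum_{\ell\in S^{\natural}}\gamma^{\natural}_\ell\left|\sum_{i=1}^D\overline{a}_{k,i}a_{\ell,i}\right|^2\le\sum_{\ell\in S^{\natural}}32\gamma^{\natural}_\ell D\log(DN)\quad\text{for all }k\notin S^{\natural}$$ hold. *)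

theory Defs
  imports "HOL-Probability.Probability"
begin

text \<open>Vectors in C^D are represented as functions nat => complex, indexed by {0..<D}
  (extensional outside), carried by the product measure space.\<close>

definition cvec_norm :: "nat \<Rightarrow> (nat \<Rightarrow> complex) \<Rightarrow> real" where
  "cvec_norm D x = sqrt (\<Sum>i<D. (cmod (x i))\<^sup>2)"

definition Leb_C :: "nat \<Rightarrow> (nat \<Rightarrow> complex) measure" where
  "Leb_C D = PiM {..<D} (\<lambda>_. lborel)"

text \<open>Uniform (normalised surface) measure on the sphere {x in C^D. norm x = sqrt D},
  realised as the cone measure: push forward the uniform distribution on the unit ball
  under radial projection x |-> sqrt D * x / norm x.\<close>
definition unif_sphere_C :: "nat \<Rightarrow> (nat \<Rightarrow> complex) measure" where
  "unif_sphere_C D =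
     distr (uniform_measure (Leb_C D) {x \<in> space (Leb_C D). cvec_norm D x \<le> 1})
           (Leb_C D)
           (\<lambda>x. \<lambda>i\<in>{..<D}. complex_of_real (sqrt (real D) / cvec_norm D x) * x i)"

definition iid_sphere :: "nat \<Rightarrow> nat \<Rightarrow> (nat \<Rightarrow> nat \<Rightarrow> complex) measure" where
  "iid_sphere N D = PiM {..<N} (\<lambda>_. unif_sphere_C D)"

end

theory Submission
  imports Defs
begin


lemma cplx_norm_sq_basis: "(cmod z)\<^sup>2 = (\<Sum>b\<in>Basis. (z \<bullet> b)\<^sup>2)"
  by (simp add: Basis_complex_def cmod_power2 inner_complex_def)

lemma G_val: "(\<integral>\<^sup>+z. ennreal (exp (- (cmod z)\<^sup>2)) \<partial>(lborel::complex measure)) = ennreal pi"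
proof -
  have one: "(\<integral>\<^sup>+x. ennreal (exp (- x\<^sup>2)) \<partial>(lborel::real measure)) = ennreal (sqrt pi)"
  proof -
    interpret N: prob_space "density lborel (normal_density 0 (1/sqrt 2))"
      by (rule prob_space_normal_density) simp
    have "1 = (\<integral>\<^sup>+x. ennreal (normal_density 0 (1/sqrt 2) x) \<partial>lborel)"
      using N.emeasure_space_1 by (simp add: emeasure_density)
    also have "\<dots> = (\<integral>\<^sup>+x. ennreal (1/sqrt pi) * ennreal (exp (- x\<^sup>2)) \<partial>lborel)"
      by (intro nn_integral_cong) (simp add: normal_density_def ennreal_mult[symmetric] real_sqrt_divide power_divide)
    also have "\<dots> = ennreal (1/sqrt pi) * (\<integral>\<^sup>+x. ennreal (exp (- x\<^sup>2)) \<partial>lborel)"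
      by (simp add: nn_integral_cmult)
    finally have "1 = ennreal (1/sqrt pi) * (\<integral>\<^sup>+x. ennreal (exp (- x\<^sup>2)) \<partial>lborel)" .
    then have "ennreal (sqrt pi) * 1 = ennreal (sqrt pi) * ennreal (1/sqrt pi) * (\<integral>\<^sup>+x. ennreal (exp (- x\<^sup>2)) \<partial>lborel)"
      by (simp add: mult.assoc)
    also have "ennreal (sqrt pi) * ennreal (1/sqrt pi) = 1"
      by (simp add: ennreal_mult[symmetric])
    finally show ?thesis by simp
  qed
  have "(\<integral>\<^sup>+z. ennreal (exp (- (cmod z)\<^sup>2)) \<partial>(lborel::complex measure))
      = (\<integral>\<^sup>+z. (\<Prod>b\<in>Basis. ennreal (exp (- (z \<bullet> b)\<^sup>2))) \<partial>(lborel::complex measure))"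
    by (intro nn_integral_cong) (simp add: cplx_norm_sq_basis Basis_complex_def ennreal_mult[symmetric] exp_add[symmetric] exp_diff)
  also have "\<dots> = (\<Prod>b\<in>(Basis::complex set). (\<integral>\<^sup>+x. ennreal (exp (- x\<^sup>2)) \<partial>lborel))"
    by (rule nn_integral_lborel_prod) auto
  also have "\<dots> = ennreal pi"
    by (simp add: one Basis_complex_def ennreal_mult[symmetric])
  finally show ?thesis .
qed



lemma complete_sq: "Re (c * z) - (cmod z)\<^sup>2 = (cmod c)\<^sup>2 / 4 - (cmod (- (cnj c / 2) + z))\<^sup>2"
  by (simp only: cmod_power2) (simp add: power2_eq_square algebra_simps)

lemma nn_integral_translate_c:
  fixes f :: "complex \<Rightarrow> ennreal"
  assumes [measurable]: "f \<in> borel_measurable borel"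
  shows "(\<integral>\<^sup>+z. f (t + z) \<partial>lborel) = (\<integral>\<^sup>+z. f z \<partial>lborel)"
proof -
  have "(\<integral>\<^sup>+z. f z \<partial>lborel) = (\<integral>\<^sup>+z. f z \<partial>(distr lborel borel ((+) t)))"
    by (simp add: lborel_distr_plus)
  also have "\<dots> = (\<integral>\<^sup>+z. f (t + z) \<partial>lborel)"
    by (subst nn_integral_distr) auto
  finally show ?thesis by simp
qed

lemma G_mgf: "(\<integral>\<^sup>+z. ennreal (exp (Re (c * z) - (cmod z)\<^sup>2)) \<partial>(lborel::complex measure))
   = ennreal (pi * exp ((cmod c)\<^sup>2 / 4))"
proof -
  have eq: "exp (Re (c * z) - (cmod z)\<^sup>2) = exp ((cmod c)\<^sup>2 / 4) * exp (- (cmod (- (cnj c / 2) + z))\<^sup>2)" for z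
    by (simp only: complete_sq exp_diff exp_minus divide_inverse)
  have "(\<integral>\<^sup>+z. ennreal (exp (Re (c * z) - (cmod z)\<^sup>2)) \<partial>(lborel::complex measure))
     = (\<integral>\<^sup>+z. ennreal (exp ((cmod c)\<^sup>2 / 4)) * ennreal (exp (- (cmod (- (cnj c / 2) + z))\<^sup>2)) \<partial>lborel)"
    by (intro nn_integral_cong) (simp only: eq, rule ennreal_mult; simp)
  also have "\<dots> = ennreal (exp ((cmod c)\<^sup>2 / 4)) * (\<integral>\<^sup>+z. ennreal (exp (- (cmod (- (cnj c / 2) + z))\<^sup>2)) \<partial>lborel)"
    by (simp add: nn_integral_cmult)
  also have "(\<integral>\<^sup>+z. ennreal (exp (- (cmod (- (cnj c / 2) + z))\<^sup>2)) \<partial>lborel) = ennreal pi"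
    using nn_integral_translate_c[of "\<lambda>z. ennreal (exp (- (cmod z)\<^sup>2))" "- (cnj c / 2)"] G_val by simp
  finally show ?thesis by (simp add: ennreal_mult[symmetric] mult.commute)
qed

lemma G_4: "(\<integral>\<^sup>+z. ennreal (exp (- 4 * (cmod z)\<^sup>2)) \<partial>(lborel::complex measure)) = ennreal (pi / 4)"
proof -
  have "ennreal pi = (\<integral>\<^sup>+z. ennreal (exp (- (cmod z)\<^sup>2)) \<partial>(lborel::complex measure))"
    using G_val by simp
  also have "\<dots> = (\<integral>\<^sup>+z. ennreal 4 * ennreal (exp (- 4 * (cmod z)\<^sup>2)) \<partial>lborel)"
    by (subst (1) lborel_affine[of 2 0]) (auto simp: nn_integral_density nn_integral_distr power2_eq_square norm_mult)
  also have "\<dots> = ennreal 4 * (\<integral>\<^sup>+z. ennreal (exp (- 4 * (cmod z)\<^sup>2)) \<partial>lborel)"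
    by (simp add: nn_integral_cmult)
  finally have **: "ennreal pi = ennreal 4 * (\<integral>\<^sup>+z. ennreal (exp (- 4 * (cmod z)\<^sup>2)) \<partial>(lborel::complex measure))" .
  have ***: "ennreal 4 * ennreal (pi/4) = ennreal pi"
    by (subst ennreal_mult[symmetric]) auto
  have *: "ennreal 4 * (\<integral>\<^sup>+z. ennreal (exp (- 4 * (cmod z)\<^sup>2)) \<partial>(lborel::complex measure)) = ennreal 4 * ennreal (pi/4)"
    using ** *** by simp
  then show ?thesis
    by (subst (asm) ennreal_mult_cancel_left) auto
qed



definition N2 :: "nat \<Rightarrow> (nat \<Rightarrow> complex) \<Rightarrow> real" where
  "N2 D x = (\<Sum>i<D. (cmod (x i))\<^sup>2)"

lemma N2_nonneg: "0 \<le> N2 D x" by (simp add: N2_def sum_nonneg)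

interpretation CL: product_sigma_finite "\<lambda>_::nat. (lborel::complex measure)"
  by standard

lemma W_prod: "ennreal (exp (- N2 D x)) = (\<Prod>i<D. ennreal (exp (- (cmod (x i))\<^sup>2)))"
  by (simp add: N2_def exp_sum[symmetric] prod_ennreal sum_negf)

lemma chernoff_re:
  assumes s: "0 \<le> s" and sig: "0 < (\<Sum>i<D. (cmod (w i))\<^sup>2)"
  shows "(\<integral>\<^sup>+x. indicator {x. s < (\<Sum>i<D. Re (w i * x i))} x * ennreal (exp (- N2 D x)) \<partial>Leb_C D)
     \<le> ennreal (exp (- s\<^sup>2 / (\<Sum>i<D. (cmod (w i))\<^sup>2)) * pi ^ D)"
proof -
  define \<sigma> where "\<sigma> = (\<Sum>i<D. (cmod (w i))\<^sup>2)"
  define t where "t = 2 * s / \<sigma>"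
  have t0: "0 \<le> t" using s sig by (simp add: t_def \<sigma>_def)
  have pt: "indicator {x. s < (\<Sum>i<D. Re (w i * x i))} x * ennreal (exp (- N2 D x))
      \<le> ennreal (exp (- t * s)) * (\<Prod>i<D. ennreal (exp (Re ((complex_of_real t * w i) * x i) - (cmod (x i))\<^sup>2)))" for x
  proof -
    have eq: "ennreal (exp (- t * s)) * (\<Prod>i<D. ennreal (exp (Re ((complex_of_real t * w i) * x i) - (cmod (x i))\<^sup>2)))
        = ennreal (exp (t * ((\<Sum>i<D. Re (w i * x i)) - s)) * exp (- N2 D x))"
      by (simp add: prod_ennreal ennreal_mult[symmetric] exp_sum[symmetric] exp_add[symmetric] N2_def
            sum_subtractf sum_distrib_left algebra_simps sum.distrib[symmetric])
    show ?thesis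
    proof (cases "s < (\<Sum>i<D. Re (w i * x i))")
      case True
      then have "1 \<le> exp (t * ((\<Sum>i<D. Re (w i * x i)) - s))" using t0 by simp
      then have "exp (- N2 D x) \<le> exp (t * ((\<Sum>i<D. Re (w i * x i)) - s)) * exp (- N2 D x)"
        by simp
      then have "ennreal (exp (- N2 D x)) \<le> ennreal (exp (t * ((\<Sum>i<D. Re (w i * x i)) - s)) * exp (- N2 D x))"
        by (rule ennreal_leI)
      then show ?thesis using True by (subst eq) simp
    qed simp
  qed
  have "(\<integral>\<^sup>+x. indicator {x. s < (\<Sum>i<D. Re (w i * x i))} x * ennreal (exp (- N2 D x)) \<partial>Leb_C D)
     \<le> (\<integral>\<^sup>+x. ennreal (exp (- t * s)) * (\<Prod>i<D. ennreal (exp (Re ((complex_of_real t * w i) * x i) - (cmod (x i))\<^sup>2))) \<partial>Leb_C D)"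
    by (rule nn_integral_mono) (rule pt)
  also have "\<dots> = ennreal (exp (- t * s)) * (\<integral>\<^sup>+x. (\<Prod>i<D. ennreal (exp (Re ((complex_of_real t * w i) * x i) - (cmod (x i))\<^sup>2))) \<partial>Leb_C D)"
    by (rule nn_integral_cmult) (simp add: Leb_C_def)
  also have "(\<integral>\<^sup>+x. (\<Prod>i<D. ennreal (exp (Re ((complex_of_real t * w i) * x i) - (cmod (x i))\<^sup>2))) \<partial>Leb_C D)
      = (\<Prod>i<D. (\<integral>\<^sup>+z. ennreal (exp (Re ((complex_of_real t * w i) * z) - (cmod z)\<^sup>2)) \<partial>lborel))"
    unfolding Leb_C_def by (rule CL.product_nn_integral_prod) auto
  also have "\<dots> = (\<Prod>i<D. ennreal (pi * exp ((cmod (complex_of_real t * w i))\<^sup>2 / 4)))"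
    by (simp only: G_mgf)
  also have "ennreal (exp (- t * s)) * (\<Prod>i<D. ennreal (pi * exp ((cmod (complex_of_real t * w i))\<^sup>2 / 4)))
      = ennreal (exp (- t * s + t\<^sup>2 * \<sigma> / 4) * pi ^ D)"
    by (simp add: prod_ennreal ennreal_mult[symmetric] prod.distrib exp_sum[symmetric] norm_mult
          power_mult_distrib \<sigma>_def sum_divide_distrib[symmetric] sum_distrib_left exp_add[symmetric] algebra_simps)
  also have "- t * s + t\<^sup>2 * \<sigma> / 4 = - s\<^sup>2 / \<sigma>"
    using sig by (simp add: t_def \<sigma>_def power2_eq_square field_simps)
  finally show ?thesis by (simp add: \<sigma>_def)
qed

lemma chernoff_small:
  "(\<integral>\<^sup>+x. indicator {x. N2 D x \<le> D / 4} x * ennreal (exp (- N2 D x)) \<partial>Leb_C D)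
     \<le> ennreal (exp (3 * D / 4) * (pi / 4) ^ D)"
proof -
  have pt: "indicator {x. N2 D x \<le> D / 4} x * ennreal (exp (- N2 D x))
      \<le> ennreal (exp (3 * D / 4)) * (\<Prod>i<D. ennreal (exp (- 4 * (cmod (x i))\<^sup>2)))" for x
  proof -
    have eq: "ennreal (exp (3 * D / 4)) * (\<Prod>i<D. ennreal (exp (- 4 * (cmod (x i))\<^sup>2)))
        = ennreal (exp (3 * D / 4 - 3 * N2 D x) * exp (- N2 D x))"
      by (simp add: prod_ennreal ennreal_mult[symmetric] exp_sum[symmetric] exp_add[symmetric] N2_def
            sum_subtractf sum_distrib_left sum_negf algebra_simps sum.distrib[symmetric])
    show ?thesis
    proof (cases "N2 D x \<le> D / 4")
      case True
      then have "1 \<le> exp (3 * D / 4 - 3 * N2 D x)" by simp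
      then have "exp (- N2 D x) \<le> exp (3 * D / 4 - 3 * N2 D x) * exp (- N2 D x)"
        by simp
      then have "ennreal (exp (- N2 D x)) \<le> ennreal (exp (3 * D / 4 - 3 * N2 D x) * exp (- N2 D x))"
        by (rule ennreal_leI)
      then show ?thesis using True by (subst eq) simp
    qed simp
  qed
  have "(\<integral>\<^sup>+x. indicator {x. N2 D x \<le> D / 4} x * ennreal (exp (- N2 D x)) \<partial>Leb_C D)
     \<le> (\<integral>\<^sup>+x. ennreal (exp (3 * D / 4)) * (\<Prod>i<D. ennreal (exp (- 4 * (cmod (x i))\<^sup>2))) \<partial>Leb_C D)"
    by (rule nn_integral_mono) (rule pt)
  also have "\<dots> = ennreal (exp (3 * D / 4)) * (\<integral>\<^sup>+x. (\<Prod>i<D. ennreal (exp (- 4 * (cmod (x i))\<^sup>2))) \<partial>Leb_C D)"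
    by (rule nn_integral_cmult) (simp add: Leb_C_def)
  also have "(\<integral>\<^sup>+x. (\<Prod>i<D. ennreal (exp (- 4 * (cmod (x i))\<^sup>2))) \<partial>Leb_C D) = (\<Prod>i<D. (\<integral>\<^sup>+z. ennreal (exp (- 4 * (cmod z)\<^sup>2)) \<partial>lborel))"
    unfolding Leb_C_def by (rule CL.product_nn_integral_prod) auto
  also have "\<dots> = (\<Prod>i<D. ennreal (pi / 4))"
    by (simp only: G_4)
  finally show ?thesis by (simp add: ennreal_mult ennreal_power)
qed



lemma emeasure_lborel_scale_c:
  assumes c: "0 < c" and B: "B \<in> sets (lborel::complex measure)"
  shows "emeasure lborel B = ennreal (c\<^sup>2) * emeasure lborel ((\<lambda>z. c *\<^sub>R z) -` B)"
proof -
  have "emeasure lborel B = emeasure (density (distr lborel borel (\<lambda>x::complex. 0 + c *\<^sub>R x)) (\<lambda>_. ennreal (\<bar>c\<bar> ^ DIM(complex)))) B"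
    by (subst (1) lborel_affine[of c 0]) (use c in auto)
  also have "\<dots> = ennreal (c\<^sup>2) * emeasure lborel ((\<lambda>z. c *\<^sub>R z) -` B)"
    using B c by (simp add: emeasure_density nn_integral_cmult_indicator emeasure_distr)
  finally show ?thesis .
qed

lemma Leb_C_scale:
  assumes c: "0 < c"
  shows "Leb_C D = density (distr (Leb_C D) (Leb_C D) (\<lambda>x. \<lambda>i\<in>{..<D}. c *\<^sub>R x i)) (\<lambda>_. ennreal (c ^ (2 * D)))"
proof -
  have meas: "(\<lambda>x. \<lambda>i\<in>{..<D}. c *\<^sub>R x i) \<in> Leb_C D \<rightarrow>\<^sub>M Leb_C D"
    unfolding Leb_C_def by measurable
  show ?thesis
    unfolding Leb_C_def
  proof (rule CL.PiM_eqI[symmetric])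
    show "finite {..<D}" by simp
    show "sets (density (distr (Pi\<^sub>M {..<D} (\<lambda>_. lborel)) (Pi\<^sub>M {..<D} (\<lambda>_. lborel)) (\<lambda>x. \<lambda>i\<in>{..<D}. c *\<^sub>R x i)) (\<lambda>_. ennreal (c ^ (2 * D))))
      = sets (Pi\<^sub>M {..<D} (\<lambda>_. lborel::complex measure))" by simp
    fix A :: "nat \<Rightarrow> complex set" assume A: "\<And>i. i \<in> {..<D} \<Longrightarrow> A i \<in> sets lborel"
    have box: "Pi\<^sub>E {..<D} A \<in> sets (Pi\<^sub>M {..<D} (\<lambda>_. lborel::complex measure))"
      using A by (intro sets_PiM_I_finite) auto
    have pre: "(\<lambda>x. \<lambda>i\<in>{..<D}. c *\<^sub>R x i) -` Pi\<^sub>E {..<D} A \<inter> space (Pi\<^sub>M {..<D} (\<lambda>_. lborel::complex measure))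
        = Pi\<^sub>E {..<D} (\<lambda>i. (\<lambda>z. c *\<^sub>R z) -` A i)"
      by (auto simp: space_PiM PiE_iff)
    have "emeasure (density (distr (Pi\<^sub>M {..<D} (\<lambda>_. lborel)) (Pi\<^sub>M {..<D} (\<lambda>_. lborel)) (\<lambda>x. \<lambda>i\<in>{..<D}. c *\<^sub>R x i)) (\<lambda>_. ennreal (c ^ (2 * D)))) (Pi\<^sub>E {..<D} A)
       = ennreal (c ^ (2 * D)) * emeasure (Pi\<^sub>M {..<D} (\<lambda>_. lborel::complex measure)) (Pi\<^sub>E {..<D} (\<lambda>i. (\<lambda>z. c *\<^sub>R z) -` A i))"
      using box meas unfolding Leb_C_def
      by (simp add: emeasure_density nn_integral_cmult_indicator emeasure_distr pre)
    also have "\<dots> = ennreal (c ^ (2 * D)) * (\<Prod>i<D. emeasure lborel ((\<lambda>z. c *\<^sub>R z) -` A i))"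
    proof -
      have "(\<lambda>z. c *\<^sub>R z) -` A i \<in> sets lborel" if "i < D" for i
      proof -
        have m: "(\<lambda>z::complex. c *\<^sub>R z) \<in> borel_measurable borel" by measurable
        show ?thesis using measurable_sets[OF m, of "A i"] A[of i] that by simp
      qed
      then show ?thesis by (subst CL.emeasure_PiM) auto
    qed
    also have "\<dots> = (\<Prod>i<D. ennreal (c\<^sup>2) * emeasure lborel ((\<lambda>z. c *\<^sub>R z) -` A i))"
      by (simp add: prod.distrib prod_ennreal power_mult c less_imp_le ennreal_power)
    also have "\<dots> = (\<Prod>i<D. emeasure lborel (A i))"
      using A c by (intro prod.cong refl emeasure_lborel_scale_c[symmetric]) auto
    finally show "emeasure (density (distr (Pi\<^sub>M {..<D} (\<lambda>_. lborel)) (Pi\<^sub>M {..<D} (\<lambda>_. lborel)) (\<lambda>x. \<lambda>i\<in>{..<D}. c *\<^sub>R x i)) (\<lambda>_. ennreal (c ^ (2 * D)))) (Pi\<^sub>E {..<D} A)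
       = (\<Prod>i\<in>{..<D}. emeasure lborel (A i))" .
  qed
qed

lemma Leb_C_scale_emeasure:
  assumes c: "0 < c" and A: "A \<in> sets (Leb_C D)"
  shows "emeasure (Leb_C D) A = ennreal (c ^ (2 * D)) * emeasure (Leb_C D) ((\<lambda>x. \<lambda>i\<in>{..<D}. c *\<^sub>R x i) -` A \<inter> space (Leb_C D))"
proof -
  have meas: "(\<lambda>x. \<lambda>i\<in>{..<D}. c *\<^sub>R x i) \<in> Leb_C D \<rightarrow>\<^sub>M Leb_C D"
    unfolding Leb_C_def by measurable
  have "emeasure (Leb_C D) A = emeasure (density (distr (Leb_C D) (Leb_C D) (\<lambda>x. \<lambda>i\<in>{..<D}. c *\<^sub>R x i)) (\<lambda>_. ennreal (c ^ (2 * D)))) A"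
    by (subst (1) Leb_C_scale[OF c]) simp
  also have "\<dots> = ennreal (c ^ (2 * D)) * emeasure (Leb_C D) ((\<lambda>x. \<lambda>i\<in>{..<D}. c *\<^sub>R x i) -` A \<inter> space (Leb_C D))"
    using A meas by (simp add: emeasure_density nn_integral_cmult_indicator emeasure_distr)
  finally show ?thesis .
qed



lemma N2_meas[measurable]: "N2 D \<in> borel_measurable (Leb_C D)"
  unfolding N2_def Leb_C_def by measurable

lemma Leb_C_sf: "sigma_finite_measure (Leb_C D)"
  unfolding Leb_C_def by (rule CL.sigma_finite) simp

lemma exp_tail: "(\<integral>\<^sup>+s. ennreal (exp (- s)) * indicator {a..} s \<partial>lborel) = ennreal (exp (- a))"
proof -
  have "(\<integral>\<^sup>+s. ennreal (exp (- s)) * indicator {a..} s \<partial>lborel) = ennreal (0 - (- exp (- a)))"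
  proof (rule nn_integral_FTC_atLeast)
    show "((\<lambda>x::real. - exp (- x)) \<longlongrightarrow> 0) at_top"
    proof -
      have "((\<lambda>x::real. exp (- x)) \<longlongrightarrow> 0) at_top"
        by (rule filterlim_compose[OF exp_at_bot filterlim_uminus_at_bot_at_top])
      from tendsto_minus[OF this] show ?thesis by simp
    qed
  qed (auto intro!: derivative_eq_intros)
  then show ?thesis by simp
qed

lemma tonelli_W:
  assumes K: "K \<in> sets (Leb_C D)"
  shows "(\<integral>\<^sup>+x. indicator K x * ennreal (exp (- N2 D x)) \<partial>Leb_C D)
    = (\<integral>\<^sup>+s. ennreal (exp (- s)) * emeasure (Leb_C D) (K \<inter> {x \<in> space (Leb_C D). N2 D x \<le> s}) \<partial>lborel)"
proof -
  interpret L: sigma_finite_measure "Leb_C D" by (rule Leb_C_sf)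
  interpret P: pair_sigma_finite "Leb_C D" lborel ..
  define f where "f x s = (if x \<in> K \<and> N2 D x \<le> s then ennreal (exp (- s)) else 0)" for x s
  have fm: "case_prod f \<in> borel_measurable (Leb_C D \<Otimes>\<^sub>M lborel)"
    unfolding f_def using K by measurable
  have "(\<integral>\<^sup>+x. indicator K x * ennreal (exp (- N2 D x)) \<partial>Leb_C D) = (\<integral>\<^sup>+x. \<integral>\<^sup>+s. f x s \<partial>lborel \<partial>Leb_C D)"
  proof (rule nn_integral_cong)
    fix x
    have "(\<integral>\<^sup>+s. f x s \<partial>lborel) = indicator K x * (\<integral>\<^sup>+s. ennreal (exp (- s)) * indicator {N2 D x..} s \<partial>lborel)"
      by (cases "x \<in> K") (auto simp: f_def intro!: nn_integral_cong split: split_indicator)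
    then show "indicator K x * ennreal (exp (- N2 D x)) = (\<integral>\<^sup>+s. f x s \<partial>lborel)"
      by (simp add: exp_tail)
  qed
  also have "\<dots> = (\<integral>\<^sup>+s. \<integral>\<^sup>+x. f x s \<partial>Leb_C D \<partial>lborel)"
    using P.Fubini'[OF fm] by simp
  also have "\<dots> = (\<integral>\<^sup>+s. ennreal (exp (- s)) * emeasure (Leb_C D) (K \<inter> {x \<in> space (Leb_C D). N2 D x \<le> s}) \<partial>lborel)"
  proof (rule nn_integral_cong)
    fix s
    have "(\<integral>\<^sup>+x. f x s \<partial>Leb_C D) = (\<integral>\<^sup>+x. ennreal (exp (- s)) * indicator (K \<inter> {x \<in> space (Leb_C D). N2 D x \<le> s}) x \<partial>Leb_C D)"
      using sets.sets_into_space[OF K]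
      by (intro nn_integral_cong) (auto simp: f_def split: split_indicator)
    also have "\<dots> = ennreal (exp (- s)) * emeasure (Leb_C D) (K \<inter> {x \<in> space (Leb_C D). N2 D x \<le> s})"
    proof -
      have Am: "K \<inter> {x \<in> space (Leb_C D). N2 D x \<le> s} \<in> sets (Leb_C D)" using K by measurable
      show ?thesis by (rule nn_integral_cmult_indicator[OF Am])
    qed
    finally show "(\<integral>\<^sup>+x. f x s \<partial>Leb_C D) = ennreal (exp (- s)) * emeasure (Leb_C D) (K \<inter> {x \<in> space (Leb_C D). N2 D x \<le> s})" .
  qed
  finally show ?thesis .
qed

definition cone :: "nat \<Rightarrow> (nat \<Rightarrow> complex) set \<Rightarrow> bool" where
  "cone D K \<longleftrightarrow> (\<forall>x\<in>space (Leb_C D). \<forall>r>0. ((\<lambda>i\<in>{..<D}. r *\<^sub>R x i) \<in> K \<longleftrightarrow> x \<in> K))"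

lemma N2_scale: "N2 D (\<lambda>i\<in>{..<D}. r *\<^sub>R x i) = r\<^sup>2 * N2 D x"
  by (simp add: N2_def sum_distrib_left power_mult_distrib)

lemma ball_scale:
  assumes K: "K \<in> sets (Leb_C D)" and cK: "cone D K" and s: "0 < s"
  shows "emeasure (Leb_C D) (K \<inter> {x \<in> space (Leb_C D). N2 D x \<le> s})
     = ennreal (s ^ D) * emeasure (Leb_C D) (K \<inter> {x \<in> space (Leb_C D). N2 D x \<le> 1})"
proof -
  define c where "c = sqrt s"
  have c: "0 < c" using s by (simp add: c_def)
  have A: "K \<inter> {x \<in> space (Leb_C D). N2 D x \<le> s} \<in> sets (Leb_C D)" using K by measurable
  have sp: "(\<lambda>i\<in>{..<D}. c *\<^sub>R x i) \<in> space (Leb_C D)" for x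
    by (simp add: Leb_C_def space_PiM)
  have "(\<lambda>x. \<lambda>i\<in>{..<D}. c *\<^sub>R x i) -` (K \<inter> {x \<in> space (Leb_C D). N2 D x \<le> s}) \<inter> space (Leb_C D)
      = K \<inter> {x \<in> space (Leb_C D). N2 D x \<le> 1}"
    using cK c s sp by (auto simp: cone_def N2_scale c_def)
  then show ?thesis
    using Leb_C_scale_emeasure[OF c A] by (simp add: c_def power_mult real_sqrt_pow2 s less_imp_le)
qed



definition B1 :: "nat \<Rightarrow> (nat \<Rightarrow> complex) set" where
  "B1 D = {x \<in> space (Leb_C D). N2 D x \<le> 1}"

definition CC :: "nat \<Rightarrow> ennreal" where
  "CC D = (\<integral>\<^sup>+s. ennreal (exp (- s) * s ^ D) * indicator {0<..} s \<partial>lborel)"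

lemma B1_sets[measurable]: "B1 D \<in> sets (Leb_C D)"
  unfolding B1_def by measurable

lemma W_total: "(\<integral>\<^sup>+x. ennreal (exp (- N2 D x)) \<partial>Leb_C D) = ennreal (pi ^ D)"
proof -
  have "(\<integral>\<^sup>+x. ennreal (exp (- N2 D x)) \<partial>Leb_C D) = (\<integral>\<^sup>+x. (\<Prod>i<D. ennreal (exp (- (cmod (x i))\<^sup>2))) \<partial>Leb_C D)"
    by (simp add: W_prod)
  also have "\<dots> = (\<Prod>i<D. (\<integral>\<^sup>+z. ennreal (exp (- (cmod z)\<^sup>2)) \<partial>lborel))"
    unfolding Leb_C_def by (rule CL.product_nn_integral_prod) auto
  also have "\<dots> = (\<Prod>i<D. ennreal pi)" by (simp only: G_val)
  finally show ?thesis by (simp add: ennreal_power)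
qed

lemma cone_int:
  assumes K: "K \<in> sets (Leb_C D)" and cK: "cone D K"
  shows "(\<integral>\<^sup>+x. indicator K x * ennreal (exp (- N2 D x)) \<partial>Leb_C D) = emeasure (Leb_C D) (K \<inter> B1 D) * CC D"
proof -
  have "(\<integral>\<^sup>+x. indicator K x * ennreal (exp (- N2 D x)) \<partial>Leb_C D)
    = (\<integral>\<^sup>+s. ennreal (exp (- s)) * emeasure (Leb_C D) (K \<inter> {x \<in> space (Leb_C D). N2 D x \<le> s}) \<partial>lborel)"
    by (rule tonelli_W[OF K])
  also have "\<dots> = (\<integral>\<^sup>+s. ennreal (exp (- s) * s ^ D) * indicator {0<..} s * emeasure (Leb_C D) (K \<inter> B1 D) \<partial>lborel)"
  proof (rule nn_integral_cong_AE)
    show "AE s in lborel. ennreal (exp (- s)) * emeasure (Leb_C D) (K \<inter> {x \<in> space (Leb_C D). N2 D x \<le> s})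
        = ennreal (exp (- s) * s ^ D) * indicator {0<..} s * emeasure (Leb_C D) (K \<inter> B1 D)"
      using AE_lborel_singleton[of "0::real"]
    proof eventually_elim
      case (elim s)
      show ?case
      proof (cases "0 < s")
        case True
        then show ?thesis using ball_scale[OF K cK True]
          by (simp add: B1_def ennreal_mult mult.assoc)
      next
        case False
        then have "s < 0" using elim by simp
        then have "K \<inter> {x \<in> space (Leb_C D). N2 D x \<le> s} = {}"
          using N2_nonneg[of D] by (auto intro: order.trans[of _ s] dest: spec) (meson leD order_trans)
        then show ?thesis using False by simp
      qed
    qed
  qed
  also have "\<dots> = emeasure (Leb_C D) (K \<inter> B1 D) * CC D"
  proof -
    have m: "(\<lambda>s. ennreal (exp (- s) * s ^ D) * indicator {0<..} s) \<in> borel_measurable lborel" by measurable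
    show ?thesis unfolding CC_def by (subst mult.commute[of "emeasure _ _"]) (rule nn_integral_multc[OF m])
  qed
  finally show ?thesis .
qed

lemma cone_space: "cone D (space (Leb_C D))"
  by (simp add: cone_def Leb_C_def space_PiM)

lemma ball_CC: "emeasure (Leb_C D) (B1 D) * CC D = ennreal (pi ^ D)"
proof -
  have "emeasure (Leb_C D) (space (Leb_C D) \<inter> B1 D) * CC D = (\<integral>\<^sup>+x. indicator (space (Leb_C D)) x * ennreal (exp (- N2 D x)) \<partial>Leb_C D)"
    by (rule cone_int[symmetric]) (auto simp: cone_space)
  also have "\<dots> = (\<integral>\<^sup>+x. ennreal (exp (- N2 D x)) \<partial>Leb_C D)"
    by (rule nn_integral_cong) simp
  finally show ?thesis using W_total B1_sets[of D, THEN sets.sets_into_space] by (simp add: Int_absorb1)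
qed

lemma ball_fin: "emeasure (Leb_C D) (B1 D) \<noteq> 0" "emeasure (Leb_C D) (B1 D) \<noteq> \<infinity>"
  "CC D \<noteq> 0" "CC D \<noteq> \<infinity>"
proof -
  have e: "emeasure (Leb_C D) (B1 D) * CC D = ennreal (pi ^ D)" by (rule ball_CC)
  have p: "ennreal (pi ^ D) \<noteq> 0" "ennreal (pi ^ D) \<noteq> \<infinity>" by auto
  show a: "emeasure (Leb_C D) (B1 D) \<noteq> 0" using e p by auto
  show b: "CC D \<noteq> 0" using e p by auto
  show "emeasure (Leb_C D) (B1 D) \<noteq> \<infinity>" using e p b by (auto simp: ennreal_mult_eq_top_iff)
  show "CC D \<noteq> \<infinity>" using e p a by (auto simp: ennreal_mult_eq_top_iff)
qed

lemma cone_ratio: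
  assumes K: "K \<in> sets (Leb_C D)" and cK: "cone D K" and g: "0 \<le> \<gamma>"
    and I: "(\<integral>\<^sup>+x. indicator K x * ennreal (exp (- N2 D x)) \<partial>Leb_C D) \<le> ennreal (\<gamma> * pi ^ D)"
  shows "emeasure (Leb_C D) (K \<inter> B1 D) \<le> ennreal \<gamma> * emeasure (Leb_C D) (B1 D)"
proof -
  have "CC D * emeasure (Leb_C D) (K \<inter> B1 D) \<le> CC D * (ennreal \<gamma> * emeasure (Leb_C D) (B1 D))"
  proof -
    have "CC D * emeasure (Leb_C D) (K \<inter> B1 D) \<le> ennreal (\<gamma> * pi ^ D)"
      using I cone_int[OF K cK] by (simp add: mult.commute)
    also have "\<dots> = ennreal \<gamma> * (emeasure (Leb_C D) (B1 D) * CC D)"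
      using g by (simp add: ball_CC ennreal_mult)
    finally show ?thesis by (simp add: mult_ac)
  qed
  then show ?thesis using ball_fin(3,4) by (simp add: ennreal_mult_le_mult_iff top_unique)
qed



definition cinner :: "nat \<Rightarrow> (nat \<Rightarrow> complex) \<Rightarrow> (nat \<Rightarrow> complex) \<Rightarrow> complex" where
  "cinner D u x = (\<Sum>i<D. cnj (u i) * x i)"

definition Kc :: "nat \<Rightarrow> real \<Rightarrow> (nat \<Rightarrow> complex) \<Rightarrow> (nat \<Rightarrow> complex) set" where
  "Kc D L u = {x \<in> space (Leb_C D). 32 * L * N2 D u * N2 D x < real D * (cmod (cinner D u x))\<^sup>2}"

lemma cinner_meas[measurable]: "cinner D u \<in> borel_measurable (Leb_C D)"
  unfolding cinner_def Leb_C_def by measurable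

lemma Kc_sets[measurable]: "Kc D L u \<in> sets (Leb_C D)"
  unfolding Kc_def by measurable

lemma cinner_scale: "cinner D u (\<lambda>i\<in>{..<D}. r *\<^sub>R x i) = r *\<^sub>R cinner D u x"
  by (simp add: cinner_def scaleR_sum_right)

lemma Kc_cone: "cone D (Kc D L u)"
  unfolding cone_def Kc_def
proof (intro ballI allI impI)
  fix x :: "nat \<Rightarrow> complex" and r :: real assume x: "x \<in> space (Leb_C D)" and r: "0 < r"
  have sp: "(\<lambda>i\<in>{..<D}. r *\<^sub>R x i) \<in> space (Leb_C D)" by (simp add: Leb_C_def space_PiM)
  have "(32 * L * N2 D u * N2 D (\<lambda>i\<in>{..<D}. r *\<^sub>R x i) < real D * (cmod (cinner D u (\<lambda>i\<in>{..<D}. r *\<^sub>R x i)))\<^sup>2)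
      \<longleftrightarrow> (r\<^sup>2 * (32 * L * N2 D u * N2 D x) < r\<^sup>2 * (real D * (cmod (cinner D u x))\<^sup>2))"
    using r by (simp add: N2_scale cinner_scale power_mult_distrib mult_ac)
  also have "\<dots> \<longleftrightarrow> 32 * L * N2 D u * N2 D x < real D * (cmod (cinner D u x))\<^sup>2"
    using r by (simp add: mult_ac)
  finally show "(\<lambda>i\<in>{..<D}. r *\<^sub>R x i) \<in> {x \<in> space (Leb_C D). 32 * L * N2 D u * N2 D x < real D * (cmod (cinner D u x))\<^sup>2}
      \<longleftrightarrow> x \<in> {x \<in> space (Leb_C D). 32 * L * N2 D u * N2 D x < real D * (cmod (cinner D u x))\<^sup>2}"
    using sp x by simp
qed



lemma sumre_meas[measurable]: "(\<lambda>x. (\<Sum>i<D. Re (w i * x i))) \<in> borel_measurable (Leb_C D)"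
  unfolding Leb_C_def by measurable

lemma ind_meas_re[measurable]:
  "(\<lambda>x. indicator {x. s < (\<Sum>i<D. Re (w i * x i))} x * ennreal (exp (- N2 D x))) \<in> borel_measurable (Leb_C D)"
proof -
  have "(\<lambda>x. indicator {x. s < (\<Sum>i<D. Re (w i * x i))} x * ennreal (exp (- N2 D x)))
     = (\<lambda>x. (if s < (\<Sum>i<D. Re (w i * x i)) then ennreal (exp (- N2 D x)) else 0))"
    by (auto split: split_indicator)
  also have "\<dots> \<in> borel_measurable (Leb_C D)"
    by measurable
  finally show ?thesis .
qed

lemma ind_meas_small[measurable]:
  "(\<lambda>x. indicator {x. N2 D x \<le> D / 4} x * ennreal (exp (- N2 D x))) \<in> borel_measurable (Leb_C D)"
proof -
  have "(\<lambda>x. indicator {x. N2 D x \<le> D / 4} x * ennreal (exp (- N2 D x)))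
     = (\<lambda>x. (if N2 D x \<le> D / 4 then ennreal (exp (- N2 D x)) else 0))"
    by (auto split: split_indicator)
  also have "\<dots> \<in> borel_measurable (Leb_C D)"
    by measurable
  finally show ?thesis .
qed

lemma sum_w_sq: "cmod c = 1 \<Longrightarrow> (\<Sum>i<D. (cmod (c * cnj (u i)))\<^sup>2) = N2 D u"
  by (simp add: N2_def norm_mult)

lemma Kc_int:
  assumes L: "0 \<le> L" and D: "0 < D"
  shows "(\<integral>\<^sup>+x. indicator (Kc D L u) x * ennreal (exp (- N2 D x)) \<partial>Leb_C D)
    \<le> ennreal ((exp (3 * real D / 4) / 4 ^ D + 4 * exp (- 4 * L)) * pi ^ D)"
proof (cases "N2 D u = 0")
  case True
  then have "\<forall>i\<in>{..<D}. (cmod (u i))\<^sup>2 = 0"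
    unfolding N2_def by (subst sum_nonneg_eq_0_iff[symmetric]) auto
  then have "cinner D u x = 0" for x by (simp add: cinner_def)
  then have "Kc D L u = {}" by (auto simp: Kc_def True)
  then show ?thesis by simp
next
  case False
  define \<sigma> where "\<sigma> = N2 D u"
  have sig: "0 < \<sigma>" using False N2_nonneg[of D u] by (simp add: \<sigma>_def)
  define s where "s = 2 * sqrt (L * \<sigma>)"
  have s0: "0 \<le> s" using L sig by (simp add: s_def)
  have ss: "s\<^sup>2 = 4 * L * \<sigma>" using L sig by (simp add: s_def power_mult_distrib)
  define A where "A c = {x. s < (\<Sum>i<D. Re ((c * cnj (u i)) * x i))}" for c :: complex
  define W where "W x = ennreal (exp (- N2 D x))" for x
  define A0 where "A0 = {x. N2 D x \<le> D / 4}"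
  have bnd: "(\<integral>\<^sup>+x. indicator (A c) x * W x \<partial>Leb_C D) \<le> ennreal (exp (- 4 * L) * pi ^ D)" if c: "cmod c = 1" for c
  proof -
    have "(\<integral>\<^sup>+x. indicator (A c) x * W x \<partial>Leb_C D) \<le> ennreal (exp (- s\<^sup>2 / (\<Sum>i<D. (cmod (c * cnj (u i)))\<^sup>2)) * pi ^ D)"
      unfolding A_def W_def by (rule chernoff_re[OF s0]) (use sig c in \<open>simp add: sum_w_sq \<sigma>_def\<close>)
    also have "\<dots> = ennreal (exp (- 4 * L) * pi ^ D)"
      using sig c by (simp add: sum_w_sq ss \<sigma>_def[symmetric])
    finally show ?thesis .
  qed
  have pt: "indicator (Kc D L u) x * W x \<le> indicator A0 x * W x + indicator (A 1) x * W x + indicator (A (-1)) x * W x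
      + indicator (A \<i>) x * W x + indicator (A (-\<i>)) x * W x" for x
  proof (cases "x \<in> Kc D L u")
    case True
    define z where "z = cinner D u x"
    have re1: "(\<Sum>i<D. Re ((1 * cnj (u i)) * x i)) = Re z" by (simp add: z_def cinner_def)
    have re2: "(\<Sum>i<D. Re ((-1 * cnj (u i)) * x i)) = - Re z" by (simp add: z_def cinner_def sum_negf[symmetric] algebra_simps)
    have re3: "(\<Sum>i<D. Re ((\<i> * cnj (u i)) * x i)) = - Im z" by (simp add: z_def cinner_def sum_negf[symmetric] algebra_simps)
    have re4: "(\<Sum>i<D. Re ((-\<i> * cnj (u i)) * x i)) = Im z" by (simp add: z_def cinner_def mult.assoc)
    have "x \<in> A0 \<or> x \<in> A 1 \<or> x \<in> A (-1) \<or> x \<in> A \<i> \<or> x \<in> A (-\<i>)"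
    proof (rule ccontr)
      assume "\<not> ?thesis"
      moreover have "x \<in> A 1 \<longleftrightarrow> s < Re z" by (simp only: A_def mem_Collect_eq re1)
      moreover have "x \<in> A (-1) \<longleftrightarrow> s < - Re z" by (simp only: A_def mem_Collect_eq re2)
      moreover have "x \<in> A \<i> \<longleftrightarrow> s < - Im z" by (simp only: A_def mem_Collect_eq re3)
      moreover have "x \<in> A (-\<i>) \<longleftrightarrow> s < Im z" by (simp only: A_def mem_Collect_eq re4)
      ultimately have n0: "D / 4 < N2 D x" and r1: "Re z \<le> s" and r2: "- Re z \<le> s" and r3: "- Im z \<le> s" and r4: "Im z \<le> s"
        unfolding A0_def by auto
      have k: "32 * L * \<sigma> * N2 D x < real D * (cmod z)\<^sup>2"
        using True by (simp add: Kc_def z_def \<sigma>_def)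
      have "32 * L * \<sigma> * (D / 4) \<le> 32 * L * \<sigma> * N2 D x"
        using n0 L sig by (intro mult_left_mono) auto
      with k have "real D * (8 * L * \<sigma>) < real D * (cmod z)\<^sup>2" by (simp add: algebra_simps)
      then have lt: "8 * L * \<sigma> < (cmod z)\<^sup>2" using D by simp
      have "(Re z)\<^sup>2 \<le> s\<^sup>2" using r1 r2 s0 by (simp add: abs_le_iff power2_le_iff_abs_le)
      moreover have "(Im z)\<^sup>2 \<le> s\<^sup>2" using r3 r4 s0 by (simp add: abs_le_iff power2_le_iff_abs_le)
      ultimately have "(cmod z)\<^sup>2 \<le> 8 * L * \<sigma>" by (simp add: cmod_power2 ss)
      with lt show False by simp
    qed
    then show ?thesis using True by (auto split: split_indicator)
  qed simp
  have "(\<integral>\<^sup>+x. indicator (Kc D L u) x * ennreal (exp (- N2 D x)) \<partial>Leb_C D)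
      \<le> (\<integral>\<^sup>+x. indicator A0 x * W x + indicator (A 1) x * W x + indicator (A (-1)) x * W x
      + indicator (A \<i>) x * W x + indicator (A (-\<i>)) x * W x \<partial>Leb_C D)"
    by (rule nn_integral_mono) (use pt in \<open>simp add: W_def\<close>)
  also have "\<dots> = (\<integral>\<^sup>+x. indicator A0 x * W x \<partial>Leb_C D) + (\<integral>\<^sup>+x. indicator (A 1) x * W x \<partial>Leb_C D)
      + (\<integral>\<^sup>+x. indicator (A (-1)) x * W x \<partial>Leb_C D) + (\<integral>\<^sup>+x. indicator (A \<i>) x * W x \<partial>Leb_C D)
      + (\<integral>\<^sup>+x. indicator (A (-\<i>)) x * W x \<partial>Leb_C D)"
  proof -
    have m0: "(\<lambda>x. indicator A0 x * W x) \<in> borel_measurable (Leb_C D)"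
      unfolding A0_def W_def by (rule ind_meas_small)
    have mA: "(\<lambda>x. indicator (A c) x * W x) \<in> borel_measurable (Leb_C D)" for c
      unfolding A_def W_def by (rule ind_meas_re)
    show ?thesis
      by (simp only: nn_integral_add m0 mA borel_measurable_add)
  qed
  also have "\<dots> \<le> ennreal (exp (3 * real D / 4) * (pi / 4) ^ D) + ennreal (exp (- 4 * L) * pi ^ D)
      + ennreal (exp (- 4 * L) * pi ^ D) + ennreal (exp (- 4 * L) * pi ^ D) + ennreal (exp (- 4 * L) * pi ^ D)"
  proof -
    have "(\<integral>\<^sup>+x. indicator A0 x * W x \<partial>Leb_C D) \<le> ennreal (exp (3 * real D / 4) * (pi / 4) ^ D)"
      using chernoff_small[of D] by (simp add: A0_def W_def)
    then show ?thesis by (intro add_mono bnd) auto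
  qed
  also have "\<dots> = ennreal ((exp (3 * real D / 4) / 4 ^ D + 4 * exp (- 4 * L)) * pi ^ D)"
    by (simp add: ennreal_plus[symmetric] power_divide algebra_simps del: ennreal_plus)
  finally show ?thesis .
qed



definition phi :: "nat \<Rightarrow> (nat \<Rightarrow> complex) \<Rightarrow> (nat \<Rightarrow> complex)" where
  "phi D x = (\<lambda>i\<in>{..<D}. complex_of_real (sqrt (real D) / cvec_norm D x) * x i)"

lemma cvec_norm_N2: "cvec_norm D x = sqrt (N2 D x)"
  by (simp add: cvec_norm_def N2_def)

lemma B1_alt: "{x \<in> space (Leb_C D). cvec_norm D x \<le> 1} = B1 D"
  by (auto simp: B1_def cvec_norm_N2)

lemma unif_alt: "unif_sphere_C D = distr (uniform_measure (Leb_C D) (B1 D)) (Leb_C D) (phi D)"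
  unfolding unif_sphere_C_def B1_alt phi_def ..

lemma cvec_norm_meas[measurable]: "cvec_norm D \<in> borel_measurable (Leb_C D)"
  unfolding cvec_norm_N2[abs_def] by measurable

lemma phi_meas[measurable]: "phi D \<in> Leb_C D \<rightarrow>\<^sub>M Leb_C D"
proof -
  have *: "(\<lambda>x. \<lambda>i\<in>{..<D}. complex_of_real (sqrt (real D) / cvec_norm D x) * x i) \<in> Pi\<^sub>M {..<D} (\<lambda>_. lborel) \<rightarrow>\<^sub>M Pi\<^sub>M {..<D} (\<lambda>_. (lborel::complex measure))"
    using cvec_norm_meas[of D] unfolding Leb_C_def by measurable
  show ?thesis unfolding phi_def using * by (simp add: Leb_C_def)
qed

lemma prob_unif_ball: "prob_space (uniform_measure (Leb_C D) (B1 D))"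
  by (rule prob_space_uniform_measure) (use ball_fin in auto)

lemma prob_unif: "prob_space (unif_sphere_C D)"
  unfolding unif_alt by (rule prob_space.prob_space_distr[OF prob_unif_ball]) simp

lemma sets_unif[simp]: "sets (unif_sphere_C D) = sets (Leb_C D)"
  by (simp add: unif_alt)

lemma space_unif[simp]: "space (unif_sphere_C D) = space (Leb_C D)"
  by (simp add: unif_alt)

lemma cinner_phi: "cinner D u (phi D x) = complex_of_real (sqrt (real D) / cvec_norm D x) * cinner D u x"
  by (simp add: cinner_def phi_def sum_distrib_left mult_ac)

lemma sphere_tail:
  assumes L: "0 \<le> L" and D: "0 < D" and u: "N2 D u \<le> real D"
  shows "emeasure (unif_sphere_C D) {v \<in> space (Leb_C D). 32 * real D * L < (cmod (cinner D u v))\<^sup>2}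
    \<le> ennreal (exp (3 * real D / 4) / 4 ^ D + 4 * exp (- 4 * L))"
proof -
  define \<gamma> where "\<gamma> = exp (3 * real D / 4) / 4 ^ D + 4 * exp (- 4 * L)"
  have g0: "0 \<le> \<gamma>" by (simp add: \<gamma>_def)
  define S where "S = {v \<in> space (Leb_C D). 32 * real D * L < (cmod (cinner D u v))\<^sup>2}"
  have S: "S \<in> sets (Leb_C D)" unfolding S_def by measurable
  have P: "phi D -` S \<inter> space (Leb_C D) \<in> sets (Leb_C D)"
    by (rule measurable_sets[OF phi_meas S])
  have sub: "B1 D \<inter> (phi D -` S \<inter> space (Leb_C D)) \<subseteq> Kc D L u \<inter> B1 D"
  proof safe
    fix x assume x: "x \<in> space (Leb_C D)" "phi D x \<in> S"
    define c where "c = cinner D u x"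
    have lt: "32 * real D * L < (cmod (complex_of_real (sqrt (real D) / cvec_norm D x) * c))\<^sup>2"
      using x by (simp add: S_def cinner_phi c_def)
    have n: "0 < N2 D x"
    proof (rule ccontr)
      assume "\<not> 0 < N2 D x"
      then have "cvec_norm D x = 0" using N2_nonneg[of D x] by (simp add: cvec_norm_N2)
      then show False using lt L D by (simp add: mult_less_0_iff)
    qed
    have "(cmod (complex_of_real (sqrt (real D) / cvec_norm D x) * c))\<^sup>2 = real D / N2 D x * (cmod c)\<^sup>2"
      using n by (simp only: norm_mult norm_of_real power_mult_distrib power2_abs) (simp add: cvec_norm_N2 power_divide)
    with lt have lt': "32 * real D * L < real D / N2 D x * (cmod c)\<^sup>2" by simp
    have "32 * real D * L * N2 D x < real D / N2 D x * (cmod c)\<^sup>2 * N2 D x"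
      by (rule mult_strict_right_mono[OF lt' n])
    then have "32 * real D * L * N2 D x < real D * (cmod c)\<^sup>2"
      using n by simp
    then have a: "32 * L * N2 D x < (cmod c)\<^sup>2" using D by (simp add: mult_ac)
    have "32 * L * N2 D u * N2 D x \<le> 32 * L * real D * N2 D x"
      using u L N2_nonneg[of D x] by (intro mult_right_mono mult_left_mono) auto
    also have "\<dots> < real D * (cmod c)\<^sup>2" using a D by (simp add: mult_ac)
    finally show "x \<in> Kc D L u" using x by (simp add: Kc_def c_def)
  qed
  have "emeasure (unif_sphere_C D) S = emeasure (uniform_measure (Leb_C D) (B1 D)) (phi D -` S \<inter> space (Leb_C D))"
    unfolding unif_alt using S by (subst emeasure_distr) auto
  also have "\<dots> = emeasure (Leb_C D) (B1 D \<inter> (phi D -` S \<inter> space (Leb_C D))) / emeasure (Leb_C D) (B1 D)"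
    using P by (simp add: emeasure_uniform_measure)
  also have "\<dots> \<le> (ennreal \<gamma> * emeasure (Leb_C D) (B1 D)) / emeasure (Leb_C D) (B1 D)"
  proof (rule divide_right_mono_ennreal)
    have "emeasure (Leb_C D) (B1 D \<inter> (phi D -` S \<inter> space (Leb_C D))) \<le> emeasure (Leb_C D) (Kc D L u \<inter> B1 D)"
      by (rule emeasure_mono[OF sub]) measurable
    also have "\<dots> \<le> ennreal \<gamma> * emeasure (Leb_C D) (B1 D)"
      by (rule cone_ratio[OF Kc_sets Kc_cone g0]) (use Kc_int[OF L D] in \<open>simp add: \<gamma>_def\<close>)
    finally show "emeasure (Leb_C D) (B1 D \<inter> (phi D -` S \<inter> space (Leb_C D))) \<le> ennreal \<gamma> * emeasure (Leb_C D) (B1 D)" .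
  qed
  also have "\<dots> = ennreal \<gamma>"
    using ball_fin(1,2) by (simp add: mult_divide_eq_ennreal)
  finally show ?thesis by (simp add: S_def \<gamma>_def)
qed



definition Bad :: "nat \<Rightarrow> nat \<Rightarrow> real \<Rightarrow> nat \<Rightarrow> nat \<Rightarrow> (nat \<Rightarrow> nat \<Rightarrow> complex) set" where
  "Bad N D L k l = {a \<in> space (iid_sphere N D). 32 * real D * L < (cmod (cinner D (a k) (a l)))\<^sup>2}"

lemma cinner_pair_meas: "(\<lambda>p. cinner D (fst p) (snd p)) \<in> borel_measurable (unif_sphere_C D \<Otimes>\<^sub>M unif_sphere_C D)"
proof -
  have f: "(\<lambda>p. fst p i) \<in> borel_measurable (Leb_C D \<Otimes>\<^sub>M Leb_C D)" if "i < D" for i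
  proof -
    have "(\<lambda>x. x i) \<in> borel_measurable (Leb_C D)"
      using measurable_component_singleton[of i "{..<D}" "\<lambda>_. lborel::complex measure"] that by (simp add: Leb_C_def)
    then show ?thesis using measurable_comp[OF measurable_fst] by (simp add: comp_def)
  qed
  have g: "(\<lambda>p. snd p i) \<in> borel_measurable (Leb_C D \<Otimes>\<^sub>M Leb_C D)" if "i < D" for i
  proof -
    have "(\<lambda>x. x i) \<in> borel_measurable (Leb_C D)"
      using measurable_component_singleton[of i "{..<D}" "\<lambda>_. lborel::complex measure"] that by (simp add: Leb_C_def)
    then show ?thesis using measurable_comp[OF measurable_snd] by (simp add: comp_def)
  qed
  have c: "(\<lambda>p. cinner D (fst p) (snd p)) \<in> borel_measurable (Leb_C D \<Otimes>\<^sub>M Leb_C D)"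
    unfolding cinner_def
  proof (rule borel_measurable_sum)
    fix i :: nat assume i: "i \<in> {..<D}"
    have i': "i < D" using i by simp
    note fi[measurable] = f[OF i'] and gi[measurable] = g[OF i']
    have cm: "(cnj :: complex \<Rightarrow> complex) \<in> borel_measurable borel"
      by (intro borel_measurable_continuous_onI continuous_intros)
    have "(\<lambda>p. cnj (fst p i)) \<in> borel_measurable (Leb_C D \<Otimes>\<^sub>M Leb_C D)"
      using measurable_compose[OF fi cm] .
    then show "(\<lambda>p. cnj (fst p i) * snd p i) \<in> borel_measurable (Leb_C D \<Otimes>\<^sub>M Leb_C D)"
      using gi by (rule borel_measurable_times)
  qed
  show ?thesis
    using c by (subst measurable_cong_sets[OF sets_pair_measure_cong[OF sets_unif sets_unif] refl])
qed

lemma Bad_sets: assumes "k < N" "l < N" shows "Bad N D L k l \<in> sets (iid_sphere N D)"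
proof -
  have p: "(\<lambda>a. (a k, a l)) \<in> iid_sphere N D \<rightarrow>\<^sub>M (unif_sphere_C D \<Otimes>\<^sub>M unif_sphere_C D)"
    unfolding iid_sphere_def using assms by (intro measurable_Pair measurable_component_singleton) auto
  have m: "(\<lambda>a. cinner D (a k) (a l)) \<in> borel_measurable (iid_sphere N D)"
    using measurable_comp[OF p cinner_pair_meas] by (simp add: comp_def)
  show ?thesis unfolding Bad_def using m by measurable
qed

lemma N2_phi: "N2 D (phi D x) \<le> real D"
proof -
  have "N2 D (phi D x) = (sqrt (real D) / cvec_norm D x)\<^sup>2 * N2 D x"
    unfolding N2_def sum_distrib_left
    by (rule sum.cong) (auto simp: phi_def norm_mult norm_divide power_divide power_mult_distrib)
  also have "\<dots> \<le> real D"
  proof (cases "N2 D x = 0")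
    case False
    then have "0 < N2 D x" using N2_nonneg[of D x] by simp
    then show ?thesis by (simp add: cvec_norm_N2 power_divide)
  qed simp
  finally show ?thesis .
qed

lemma AE_unif_N2: "AE u in unif_sphere_C D. N2 D u \<le> real D"
proof -
  have s: "{u \<in> space (Leb_C D). N2 D u \<le> real D} \<in> sets (Leb_C D)" by measurable
  have pm: "phi D \<in> uniform_measure (Leb_C D) (B1 D) \<rightarrow>\<^sub>M Leb_C D"
    using phi_meas by (subst measurable_cong_sets[OF sets_uniform_measure refl])
  show ?thesis unfolding unif_alt
    by (subst AE_distr_iff[OF pm s]) (simp add: N2_phi)
qed

lemma bad_pair_bound:
  assumes k: "k < N" and l: "l < N" and kl: "k \<noteq> l" and D: "0 < D" and L: "0 \<le> L"
  shows "measure (iid_sphere N D) (Bad N D L k l) \<le> exp (3 * real D / 4) / 4 ^ D + 4 * exp (- 4 * L)"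
proof -
  define \<gamma> where "\<gamma> = exp (3 * real D / 4) / 4 ^ D + 4 * exp (- 4 * L)"
  have g0: "0 \<le> \<gamma>" by (simp add: \<gamma>_def)
  interpret PS: product_sigma_finite "\<lambda>_::nat. unif_sphere_C D"
    unfolding product_sigma_finite_def using prob_unif prob_space_imp_sigma_finite by blast
  interpret P: prob_space "iid_sphere N D"
    unfolding iid_sphere_def by (rule prob_space_PiM) (rule prob_unif)
  define I' where "I' = {..<N} - {l}"
  have I'ins: "{..<N} = insert l I'" "finite I'" "l \<notin> I'" and kI: "k \<in> I'"
    using l k kl by (auto simp: I'_def)
  interpret P': prob_space "PiM I' (\<lambda>_. unif_sphere_C D)"
    by (rule prob_space_PiM) (rule prob_unif)
  have BS: "Bad N D L k l \<in> sets (iid_sphere N D)" by (rule Bad_sets[OF k l])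
  have "emeasure (iid_sphere N D) (Bad N D L k l) = (\<integral>\<^sup>+a. indicator (Bad N D L k l) a \<partial>PiM (insert l I') (\<lambda>_. unif_sphere_C D))"
    using BS by (simp add: iid_sphere_def I'ins(1)[symmetric])
  also have "\<dots> = (\<integral>\<^sup>+x. (\<integral>\<^sup>+y. indicator (Bad N D L k l) (x(l := y)) \<partial>unif_sphere_C D) \<partial>PiM I' (\<lambda>_. unif_sphere_C D))"
    by (rule PS.product_nn_integral_insert[OF I'ins(2,3)]) (use BS in \<open>simp add: iid_sphere_def I'ins(1)[symmetric]\<close>)
  also have "\<dots> \<le> (\<integral>\<^sup>+x. ennreal \<gamma> \<partial>PiM I' (\<lambda>_. unif_sphere_C D))"
  proof (rule nn_integral_mono_AE)
    have ae: "AE x in PiM I' (\<lambda>_. unif_sphere_C D). N2 D (x k) \<le> real D"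
      by (rule AE_PiM_component[OF prob_unif kI AE_unif_N2])
    show "AE x in PiM I' (\<lambda>_. unif_sphere_C D). (\<integral>\<^sup>+y. indicator (Bad N D L k l) (x(l := y)) \<partial>unif_sphere_C D) \<le> ennreal \<gamma>"
      using ae
    proof (rule AE_mp[OF _ AE_I2], intro impI)
      fix x assume x: "x \<in> space (PiM I' (\<lambda>_. unif_sphere_C D))" and n: "N2 D (x k) \<le> real D"
      have eqi: "indicator (Bad N D L k l) (x(l := y)) = indicator {v \<in> space (Leb_C D). 32 * real D * L < (cmod (cinner D (x k) v))\<^sup>2} y"
        if y: "y \<in> space (unif_sphere_C D)" for y
      proof -
        have "x(l := y) \<in> space (iid_sphere N D)"
          using x y unfolding iid_sphere_def I'ins(1)
          by (auto simp: space_PiM PiE_iff extensional_def)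
        then show ?thesis using y kl by (simp add: Bad_def split: split_indicator)
      qed
      have "(\<integral>\<^sup>+y. indicator (Bad N D L k l) (x(l := y)) \<partial>unif_sphere_C D)
          = (\<integral>\<^sup>+y. indicator {v \<in> space (Leb_C D). 32 * real D * L < (cmod (cinner D (x k) v))\<^sup>2} y \<partial>unif_sphere_C D)"
        by (rule nn_integral_cong) (rule eqi)
      also have "\<dots> = emeasure (unif_sphere_C D) {v \<in> space (Leb_C D). 32 * real D * L < (cmod (cinner D (x k) v))\<^sup>2}"
        by (rule nn_integral_indicator) (simp, measurable)
      also have "\<dots> \<le> ennreal \<gamma>"
        unfolding \<gamma>_def by (rule sphere_tail[OF L D n])
      finally show "(\<integral>\<^sup>+y. indicator (Bad N D L k l) (x(l := y)) \<partial>unif_sphere_C D) \<le> ennreal \<gamma>" .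
    qed
  qed
  also have "\<dots> = ennreal \<gamma>"
    by (simp add: P'.emeasure_space_1)
  finally have "emeasure (iid_sphere N D) (Bad N D L k l) \<le> ennreal \<gamma>" .
  then have "ennreal (measure (iid_sphere N D) (Bad N D L k l)) \<le> ennreal \<gamma>"
    by (simp add: P.emeasure_eq_measure)
  then show ?thesis unfolding \<gamma>_def[symmetric] using ennreal_le_iff[OF g0] by blast
qed



lemma le_sqrt_iff: "0 \<le> (a::real) \<Longrightarrow> a \<le> sqrt b \<longleftrightarrow> a\<^sup>2 \<le> b"
  by (metis real_le_rsqrt real_sqrt_le_iff real_sqrt_pow2_iff real_sqrt_unique sqrt_le_D)

lemma final_arith:
  assumes N: "1 \<le> N" and D: "1 \<le> D" and h: "8 * ln (real D * real N) < real D"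
  shows "real N ^ 2 * (exp (3 * real D / 4) / 4 ^ D + 4 * exp (- 4 * ln (real D * real N)))
     \<le> 5 / (real D * sqrt (real D))"
proof -
  define x where "x = real D * real N"
  have "1 * 1 \<le> D * N" using D N by (rule mult_le_mono)
  then have "(1::real) \<le> real (D * N)" by (metis of_nat_1 of_nat_le_iff mult_1)
  then have x1: "1 \<le> x" by (simp add: x_def)
  have Dr: "1 \<le> real D" using D by simp
  have sD1: "1 \<le> sqrt (real D)" using Dr by simp
  have sD: "sqrt (real D) \<le> real D"
    using mult_left_mono[OF sD1, of "sqrt (real D)"] Dr by simp
  have DsD: "real D * sqrt (real D) \<le> real D ^ 2"
    using sD Dr by (simp add: power2_eq_square)
  have e4: "exp (- 4 * ln x) = 1 / x ^ 4"
  proof -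
    have "exp (4 * ln x) = exp (ln x) ^ 4" using exp_of_nat_mult[of 4 "ln x"] by simp
    then have "exp (4 * ln x) = x ^ 4" using x1 by simp
    then show ?thesis by (simp add: exp_minus divide_inverse)
  qed
  have t2: "real N ^ 2 * (4 * exp (- 4 * ln x)) \<le> 4 / (real D * sqrt (real D))"
  proof -
    have "real N ^ 2 * (4 * exp (- 4 * ln x)) = real N ^ 2 * (4 / x ^ 4)" by (simp only: e4)
    also have "\<dots> = 4 / (real D ^ 4 * real N ^ 2)"
      using N D by (simp add: x_def power_mult_distrib field_simps eval_nat_numeral)
    also have "\<dots> \<le> 4 / (real D * sqrt (real D))"
    proof (rule divide_left_mono)
      have "real D * sqrt (real D) \<le> real D ^ 2" by (rule DsD)
      also have "\<dots> \<le> real D ^ 4" using Dr by (intro power_increasing) auto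
      also have "\<dots> \<le> real D ^ 4 * real N ^ 2" using N Dr by simp
      finally show "real D * sqrt (real D) \<le> real D ^ 4 * real N ^ 2" .
    qed (use Dr sD1 N in auto)
    finally show ?thesis .
  qed
  have t1: "real N ^ 2 * (exp (3 * real D / 4) / 4 ^ D) \<le> 1 / (real D * sqrt (real D))"
  proof -
    have "x < exp (real D / 8)"
    proof -
      have "ln x < real D / 8" using h by (simp add: x_def)
      then have "exp (ln x) < exp (real D / 8)" by simp
      then show ?thesis using x1 by simp
    qed
    then have "x ^ 2 < exp (real D / 8) ^ 2" using x1 by (intro power_strict_mono) auto
    also have "exp (real D / 8) ^ 2 = exp (real D / 4)"
      by (simp add: power2_eq_square exp_add[symmetric])
    finally have x2: "real D ^ 2 * real N ^ 2 < exp (real D / 4)" by (simp add: x_def power_mult_distrib)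
    have e1: "exp (real D) \<le> 4 ^ D"
    proof -
      have "exp (real D) = exp 1 ^ D" using exp_of_nat_mult[of D 1] by simp
      also have "\<dots> \<le> 4 ^ D" using exp_le by (intro power_mono) auto
      finally show ?thesis .
    qed
    have "real D ^ 2 * (real N ^ 2 * (exp (3 * real D / 4) / 4 ^ D)) = (real D ^ 2 * real N ^ 2) * exp (3 * real D / 4) / 4 ^ D"
      by simp
    also have "\<dots> \<le> exp (real D / 4) * exp (3 * real D / 4) / 4 ^ D"
      using x2 by (intro divide_right_mono mult_right_mono) auto
    also have "\<dots> = exp (real D) / 4 ^ D" by (simp add: exp_add[symmetric])
    also have "\<dots> \<le> 1" using e1 by simp
    finally have "real D ^ 2 * (real N ^ 2 * (exp (3 * real D / 4) / 4 ^ D)) \<le> 1" .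
    then have "real N ^ 2 * (exp (3 * real D / 4) / 4 ^ D) \<le> 1 / real D ^ 2"
      using Dr by (simp add: field_simps)
    also have "\<dots> \<le> 1 / (real D * sqrt (real D))"
      using DsD Dr sD1 by (intro divide_left_mono) auto
    finally show ?thesis .
  qed
  have "real N ^ 2 * (exp (3 * real D / 4) / 4 ^ D + 4 * exp (- 4 * ln x))
     = real N ^ 2 * (exp (3 * real D / 4) / 4 ^ D) + real N ^ 2 * (4 * exp (- 4 * ln x))"
    by (simp add: algebra_simps)
  also have "\<dots> \<le> 1 / (real D * sqrt (real D)) + 4 / (real D * sqrt (real D))"
    by (rule add_mono[OF t1 t2])
  finally show ?thesis by (simp add: x_def add_divide_distrib[symmetric])
qed



lemma pair_equiv:
  assumes D: "0 < D" and L: "0 \<le> L"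
  shows "cmod ((1 / complex_of_real (real D)) * s) \<le> sqrt (32 * L / real D) \<longleftrightarrow> \<not> (32 * real D * L < (cmod s)\<^sup>2)"
proof -
  have "cmod ((1 / complex_of_real (real D)) * s) = cmod s / real D"
    by (simp add: norm_mult norm_divide)
  then have "cmod ((1 / complex_of_real (real D)) * s) \<le> sqrt (32 * L / real D) \<longleftrightarrow> (cmod s / real D)\<^sup>2 \<le> 32 * L / real D"
    by (simp add: le_sqrt_iff)
  also have "\<dots> \<longleftrightarrow> (cmod s)\<^sup>2 \<le> 32 * real D * L"
    using D by (simp add: power_divide field_simps power2_eq_square)
  finally show ?thesis by (simp only: not_less)
qed

theorem lemma3:
  "\<exists>c0::real. \<forall>(D::nat) (N::nat) (S::nat set) (\<gamma>::nat \<Rightarrow> real).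
     1 \<le> N \<longrightarrow> 1 \<le> D \<longrightarrow>
     S \<subseteq> {..<N} \<longrightarrow>
     (\<forall>l<N. 0 \<le> \<gamma> l) \<longrightarrow>
     (\<forall>l<N. l \<notin> S \<longrightarrow> \<gamma> l = 0) \<longrightarrow>
     8 * ln (real D * real N) < real D \<longrightarrow>
     measure (iid_sphere N D)
       {a \<in> space (iid_sphere N D).
          (\<forall>k<N. \<forall>l<N. k \<noteq> l \<longrightarrow>
             cmod ((1 / complex_of_real (real D)) * (\<Sum>i<D. cnj (a k i) * a l i))
               \<le> sqrt (32 * ln (real D * real N) / real D))
        \<and> (\<forall>k<N. k \<notin> S \<longrightarrow>
             (\<Sum>l\<in>S. \<gamma> l * (cmod (\<Sum>i<D. cnj (a k i) * a l i))\<^sup>2)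
               \<le> (\<Sum>l\<in>S. 32 * \<gamma> l * real D * ln (real D * real N)))}
     \<ge> 1 - c0 / (real D * sqrt (real D))"
proof (intro exI[of _ 5] allI impI)
  fix D N :: nat and S :: "nat set" and \<gamma> :: "nat \<Rightarrow> real"
  assume N: "1 \<le> N" and D: "1 \<le> D" and S: "S \<subseteq> {..<N}" and g: "\<forall>l<N. 0 \<le> \<gamma> l"
    and g0: "\<forall>l<N. l \<notin> S \<longrightarrow> \<gamma> l = 0" and h: "8 * ln (real D * real N) < real D"
  define L where "L = ln (real D * real N)"
  have "1 * 1 \<le> D * N" using D N by (rule mult_le_mono)
  then have "(1::real) \<le> real (D * N)" by (metis of_nat_1 of_nat_le_iff mult_1)
  then have L0: "0 \<le> L" by (simp add: L_def)
  have D0: "0 < D" using D by simp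
  interpret P: prob_space "iid_sphere N D"
    unfolding iid_sphere_def by (rule prob_space_PiM) (rule prob_unif)
  define Pairs where "Pairs = {p :: nat \<times> nat. fst p < N \<and> snd p < N \<and> fst p \<noteq> snd p}"
  have PS: "Pairs \<subseteq> {..<N} \<times> {..<N}" by (auto simp: Pairs_def)
  have finP: "finite Pairs" by (rule finite_subset[OF PS]) simp
  have cardP: "real (card Pairs) \<le> real N ^ 2"
  proof -
    have "card Pairs \<le> card ({..<N} \<times> {..<N})" by (rule card_mono[OF _ PS]) simp
    then have "card Pairs \<le> N * N" by (simp add: card_cartesian_product)
    then have "real (card Pairs) \<le> real (N * N)" by (simp only: of_nat_le_iff)
    then show ?thesis by (simp add: power2_eq_square)
  qed
  define U where "U = (\<Union>p\<in>Pairs. Bad N D L (fst p) (snd p))"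
  have BS: "p \<in> Pairs \<Longrightarrow> Bad N D L (fst p) (snd p) \<in> sets (iid_sphere N D)" for p
    by (rule Bad_sets) (auto simp: Pairs_def)
  have US: "U \<in> sets (iid_sphere N D)" unfolding U_def using finP BS by blast
  define \<beta> where "\<beta> = exp (3 * real D / 4) / 4 ^ D + 4 * exp (- 4 * L)"
  have b0: "0 \<le> \<beta>" by (simp add: \<beta>_def)
  let ?G = "{a \<in> space (iid_sphere N D).
          (\<forall>k<N. \<forall>l<N. k \<noteq> l \<longrightarrow>
             cmod ((1 / complex_of_real (real D)) * (\<Sum>i<D. cnj (a k i) * a l i))
               \<le> sqrt (32 * ln (real D * real N) / real D))
        \<and> (\<forall>k<N. k \<notin> S \<longrightarrow>
             (\<Sum>l\<in>S. \<gamma> l * (cmod (\<Sum>i<D. cnj (a k i) * a l i))\<^sup>2)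
               \<le> (\<Sum>l\<in>S. 32 * \<gamma> l * real D * ln (real D * real N)))}"
  have eqv: "cmod ((1 / complex_of_real (real D)) * (\<Sum>i<D. cnj (a k i) * a l i)) \<le> sqrt (32 * ln (real D * real N) / real D)
     \<longleftrightarrow> \<not> (32 * real D * L < (cmod (cinner D (a k) (a l)))\<^sup>2)" for a k l
    unfolding L_def[symmetric] cinner_def by (rule pair_equiv[OF D0 L0])
  have Geq: "?G = space (iid_sphere N D) - U"
  proof (intro equalityI subsetI)
    fix a assume a: "a \<in> ?G"
    then have "a \<notin> Bad N D L (fst p) (snd p)" if "p \<in> Pairs" for p
      using that eqv[of a "fst p" "snd p"] by (auto simp: Pairs_def Bad_def)
    then show "a \<in> space (iid_sphere N D) - U" using a by (auto simp: U_def)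
  next
    fix a assume a: "a \<in> space (iid_sphere N D) - U"
    have c1: "\<not> (32 * real D * L < (cmod (cinner D (a k) (a l)))\<^sup>2)" if "k < N" "l < N" "k \<noteq> l" for k l
    proof -
      have "(k, l) \<in> Pairs" using that by (simp add: Pairs_def)
      then have "a \<notin> Bad N D L k l" using a by (auto simp: U_def)
      then show ?thesis using a by (simp add: Bad_def)
    qed
    have c2: "(\<Sum>l\<in>S. \<gamma> l * (cmod (\<Sum>i<D. cnj (a k i) * a l i))\<^sup>2)
               \<le> (\<Sum>l\<in>S. 32 * \<gamma> l * real D * ln (real D * real N))" if k: "k < N" "k \<notin> S" for k
    proof (rule sum_mono)
      fix l assume l: "l \<in> S"
      have lN: "l < N" using l S by auto
      have "(cmod (cinner D (a k) (a l)))\<^sup>2 \<le> 32 * real D * L" 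
      proof -
        have "k \<noteq> l" using l k by auto
        then show ?thesis using c1[OF k(1) lN] by (simp add: not_less)
      qed
      then have "\<gamma> l * (cmod (cinner D (a k) (a l)))\<^sup>2 \<le> \<gamma> l * (32 * real D * L)"
        using g lN by (intro mult_left_mono) auto
      then show "\<gamma> l * (cmod (\<Sum>i<D. cnj (a k i) * a l i))\<^sup>2 \<le> 32 * \<gamma> l * real D * ln (real D * real N)"
        by (simp add: cinner_def L_def mult_ac)
    qed
    have c1': "\<forall>k<N. \<forall>l<N. k \<noteq> l \<longrightarrow>
             cmod ((1 / complex_of_real (real D)) * (\<Sum>i<D. cnj (a k i) * a l i))
               \<le> sqrt (32 * ln (real D * real N) / real D)"
    proof (intro allI impI)
      fix k l assume kl: "k < N" "l < N" "k \<noteq> l"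
      show "cmod ((1 / complex_of_real (real D)) * (\<Sum>i<D. cnj (a k i) * a l i))
               \<le> sqrt (32 * ln (real D * real N) / real D)"
        unfolding eqv using c1[OF kl] .
    qed
    have c2': "\<forall>k<N. k \<notin> S \<longrightarrow>
             (\<Sum>l\<in>S. \<gamma> l * (cmod (\<Sum>i<D. cnj (a k i) * a l i))\<^sup>2)
               \<le> (\<Sum>l\<in>S. 32 * \<gamma> l * real D * ln (real D * real N))"
      using c2 by blast
    have a': "a \<in> space (iid_sphere N D)" using a by blast
    show "a \<in> ?G" unfolding mem_Collect_eq using a' c1' c2' by blast
  qed
  have "P.prob U \<le> (\<Sum>p\<in>Pairs. P.prob (Bad N D L (fst p) (snd p)))"
    unfolding U_def by (rule measure_UNION_le[OF finP BS])
  also have "\<dots> \<le> (\<Sum>p\<in>Pairs. \<beta>)"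
  proof (rule sum_mono)
    fix p assume "p \<in> Pairs"
    then have "fst p < N" "snd p < N" "fst p \<noteq> snd p" by (auto simp: Pairs_def)
    from bad_pair_bound[OF this D0 L0] show "P.prob (Bad N D L (fst p) (snd p)) \<le> \<beta>"
      unfolding \<beta>_def .
  qed
  also have "\<dots> = real (card Pairs) * \<beta>" by simp
  also have "\<dots> \<le> real N ^ 2 * \<beta>" by (rule mult_right_mono[OF cardP b0])
  also have "\<dots> \<le> 5 / (real D * sqrt (real D))"
    unfolding \<beta>_def L_def by (rule final_arith[OF N D h])
  finally have pu: "P.prob U \<le> 5 / (real D * sqrt (real D))" .
  have "P.prob ?G = 1 - P.prob U" unfolding Geq by (rule P.prob_compl[OF US])
  then show "1 - 5 / (real D * sqrt (real D)) \<le> P.prob ?G" using pu by simp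
qed


end
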